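(* Let $\Pi$ be a stably (resp. haltingly) correct CRN protocol with respect to an interface $\mathcal{I}$, and let $\mathbf{C}^0$ be an infinite family of valid initial configurations that has a stabilization (resp. halting) speed fault. Then there is a constant $\kappa>0$ such that for every integer $n_0>0$ there exist a configuration $\mathbf{c}^0\in\mathbf{C}^0$ of molecular count $\|\mathbf{c}^0\|_1=n\ge n_0$, a weakly fair execution $\eta$ emerging from $\mathbf{c}^0$, and a skipping policy $\sigma$ such that $\operatorname{RT}_{\mathrm{x}}^{\varrho,\sigma}(\eta)\ge\kappa n$ for every runtime policy $\varrho$, where $\mathrm{x}$ stands for $\mathrm{stab}$ (resp. $\mathrm{halt}$).
   Context: Model. CRN protocol $\Pi=(\mathcal{S},\mathcal{R})$: finite species set, finite reaction set $\mathcal{R}\subset\mathbb{N}^{\mathcal{S}}\times\mathbb{N}^{\mathcal{S}}$ of reactions $(\mathbf{r},\mathbf{p})$ with $\|\mathbf{r}\|_1\in\{1,2\}$, $\|\mathbf{r}\|_1\le\|\mathbf{p}\|_1$, each $\mathbf{r}$ with $1\le\|\mathbf{r}\|_1\le2$ having a nonempty set $\mathcal{R}(\mathbf{r})$ of reactions, void reactions ($\mathbf{r}=\mathbf{p}$) being alone in their $\mathcal{R}(\mathbf{r})$, $\operatorname{NV}(\mathcal{R})$ the non-void ones; finite density assumed. Configurations $\mathbf{c}\in\mathbb{N}^{\mathcal{S}}$ ($\|\mathbf{c}\|_1\ge1$); applicability $\mathbf{r}\le\mathbf{c}$, result $\mathbf{c}-\mathbf{r}+\mathbf{p}$; $\operatorname{app}(\mathbf{c})$,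 $\overline{\operatorname{app}}(\mathbf{c})$; reachability $\stackrel{*}{\rightharpoonup}$; configuration digraph $D^{\Pi}$ with $\alpha$-labeled edges $\mathbf{c}\to\alpha(\mathbf{c})$. $\mathrm{stab}(Z)$, $\mathrm{halt}(Z)$: configurations in $Z$ all of whose reachable configurations are in $Z$, resp. equal to themselves. Executions $\langle\mathbf{c}^t,\alpha^t\rangle$, weakly fair if every reaction applicable at step $t$ is scheduled or inapplicable at some later step. Interface $\mathcal{I}=(\mathcal{U},\mu,\mathcal{C})$, $Z_{\mathcal{I}}(\mathbf{c}^0)=\{\mathbf{c}:(\mu(\mathbf{c}^0),\mu(\mathbf{c}))\in\mathcal{C}\}$ with $\mu(\mathbf{c})(u)=\sum_{\mu(A)=u}\mathbf{c}(A)$; valid if nonempty; stably (haltingly) correct: every weakly fair execution from valid $\mathbf{c}^0$ reaches $\mathrm{stab}(Z_{\mathcal{I}}(\mathbf{c}^0))$ ($\mathrm{halt}$); first such step = stabilization (halting) step. Stochastic scheduler with volume $\varphi=\Theta(n)$: propensity $\pi_{\mathbf{c}}(\alpha)=\mathbf{c}(A)/|\mathcal{R}(\mathbf{r})|$ ($\mathbf{r}=A$), $\frac1\varphi\binom{\mathbf{c}(A)}2/|\mathcal{R}(\mathbf{r})|$ ($\mathbf{r}=2A$), $\frac1\varphi\mathbf{c}(A)\mathbf{c}(B)/|\mathcal{R}(\mathbf{r})|$ ($\mathbf{r}=A+B$, $A\ne B$); $\pi_{\mathbf{c}}=\pi_{\mathbf{c}}(\mathcal{R})$; reactions chosen with probability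 proportional to propensity; step time span $1/\pi_{\mathbf{c}^t}$. Runtime: $\tau(\eta,t,Q)=$ least $s>t$ with $\alpha^{s-1}\in Q$ or $Q\subseteq\bigcup_{t\le t'\le s}\overline{\operatorname{app}}(\mathbf{c}^{t'})$; runtime policy $\varrho(\mathbf{c})\subseteq\operatorname{NV}(\mathcal{R})$; skipping policy $\sigma(t)\ge t$; rounds $t(0)=0$, $t_e(i)=\sigma(t(i))$, $\mathbf{e}^i=\mathbf{c}^{t_e(i)}$, $t(i+1)=\tau(\eta,t_e(i),\varrho(\mathbf{e}^i))$; $\operatorname{TC}^{\varrho}(\mathbf{c})$ = expected total time span of steps $0,\dots,\tau(\eta_r,0,\varrho(\mathbf{c}))-1$ of a stochastic execution $\eta_r$ from $\mathbf{c}$; $\operatorname{RT}_{\mathrm{stab}}^{\varrho,\sigma}(\eta)$ (resp. $\mathrm{halt}$) $=\sum_{i<i^*}\operatorname{TC}^{\varrho}(\mathbf{e}^i)$ with $i^*=\min\{i:t(i)\ge t^*\}$, $t^*$ the stabilization (halting) step. Speed faults: for $s>0$, a configuration $\mathbf{c}$ is a stabilization (resp. halting) $s$-pitfall of a valid initial configuration $\mathbf{c}^0$ if $\mathbf{c}^0\stackrel{*}{\rightharpoonup}\mathbf{c}$ and every path in $D^{\Pi}$ from $\mathbf{c}$ to $\mathrm{stab}(Z_{\mathcal{I}}(\mathbf{c}^0))$ (resp. $\mathrm{halt}(Z_{\mathcal{I}}(\mathbf{c}^0))$) includes an edge labeled by a reaction whose propensity (at the edge's source configuration) is at most $s/\varphi$.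 An infinite family $\mathbf{C}^0$ of valid initial configurations has a stabilization (resp. halting) speed fault if for some constant $s>0$ and every integer $n_0>0$ there is $\mathbf{c}^0\in\mathbf{C}^0$ with $\|\mathbf{c}^0\|_1\ge n_0$ that admits a stabilization (resp. halting) $s$-pitfall. *)

theory Defs
  imports "HOL-Analysis.Analysis"
begin

(* Species: the elements of a finite type 's.  Configurations / reactant and
   product vectors: 's => nat.  A reaction is a pair (r, p). *)
type_synonym 's config = "'s \<Rightarrow> nat"
type_synonym 's reaction = "'s config \<times> 's config"

definition norm1 :: "('s::finite) config \<Rightarrow> nat" where
  "norm1 c = (\<Sum>A\<in>UNIV. c A)"

definition reactions_of :: "('s::finite) reaction set \<Rightarrow> 's config \<Rightarrow> 's reaction set" where
  "reactions_of R r = {\<alpha>\<in>R. fst \<alpha> = r}"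

definition crn_protocol :: "('s::finite) reaction set \<Rightarrow> bool" where
  "crn_protocol R \<longleftrightarrow> finite R
     \<and> (\<forall>(r,p)\<in>R. 1 \<le> norm1 r \<and> norm1 r \<le> 2 \<and> norm1 r \<le> norm1 p)
     \<and> (\<forall>r. 1 \<le> norm1 r \<and> norm1 r \<le> 2 \<longrightarrow> reactions_of R r \<noteq> {})
     \<and> (\<forall>r. (r,r) \<in> R \<longrightarrow> reactions_of R r = {(r,r)})"

definition NV :: "('s::finite) reaction set \<Rightarrow> 's reaction set" where
  "NV R = {(r,p)\<in>R. r \<noteq> p}"

definition applicable :: "('s::finite) reaction \<Rightarrow> 's config \<Rightarrow> bool" where
  "applicable \<alpha> c \<longleftrightarrow> fst \<alpha> \<le> c"

definition result :: "('s::finite) reaction \<Rightarrow> 's config \<Rightarrow> 's config" where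
  "result \<alpha> c = (\<lambda>A. c A - fst \<alpha> A + snd \<alpha> A)"

definition app :: "('s::finite) reaction set \<Rightarrow> 's config \<Rightarrow> 's reaction set" where
  "app R c = {\<alpha>\<in>R. applicable \<alpha> c}"

definition inapp :: "('s::finite) reaction set \<Rightarrow> 's config \<Rightarrow> 's reaction set" where
  "inapp R c = {\<alpha>\<in>R. \<not> applicable \<alpha> c}"

definition step :: "('s::finite) reaction set \<Rightarrow> 's config \<Rightarrow> 's config \<Rightarrow> bool" where
  "step R c c' \<longleftrightarrow> (\<exists>\<alpha>\<in>R. applicable \<alpha> c \<and> c' = result \<alpha> c)"

definition reach :: "('s::finite) reaction set \<Rightarrow> 's config \<Rightarrow> 's config \<Rightarrow> bool" where
  "reach R = (step R)\<^sup>*\<^sup>*"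

(* Interface I = (U, mu, C): U is the type 'u, mu :: 's => 'u, C a relation *)
definition proj :: "(('s::finite) \<Rightarrow> 'u) \<Rightarrow> 's config \<Rightarrow> ('u \<Rightarrow> nat)" where
  "proj \<mu> c = (\<lambda>u. \<Sum>A\<in>{A. \<mu> A = u}. c A)"

definition Zset :: "(('s::finite) \<Rightarrow> 'u) \<Rightarrow> (('u \<Rightarrow> nat) \<times> ('u \<Rightarrow> nat)) set \<Rightarrow> 's config \<Rightarrow> 's config set" where
  "Zset \<mu> Cr c0 = {c. (proj \<mu> c0, proj \<mu> c) \<in> Cr}"

definition valid :: "(('s::finite) \<Rightarrow> 'u) \<Rightarrow> (('u \<Rightarrow> nat) \<times> ('u \<Rightarrow> nat)) set \<Rightarrow> 's config \<Rightarrow> bool" where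
  "valid \<mu> Cr c0 \<longleftrightarrow> 1 \<le> norm1 c0 \<and> Zset \<mu> Cr c0 \<noteq> {}"

definition stab :: "('s::finite) reaction set \<Rightarrow> 's config set \<Rightarrow> 's config set" where
  "stab R Z = {c\<in>Z. \<forall>c'. reach R c c' \<longrightarrow> c' \<in> Z}"

definition halt :: "('s::finite) reaction set \<Rightarrow> 's config set \<Rightarrow> 's config set" where
  "halt R Z = {c\<in>Z. \<forall>c'. reach R c c' \<longrightarrow> c' = c}"

datatype mode = Stab | Halt

definition target :: "mode \<Rightarrow> ('s::finite) reaction set \<Rightarrow> 's config set \<Rightarrow> 's config set" where
  "target x R Z = (case x of Stab \<Rightarrow> stab R Z | Halt \<Rightarrow> halt R Z)"

definition execution :: "('s::finite) reaction set \<Rightarrow> 's config \<Rightarrow> (nat \<Rightarrow> 's config) \<Rightarrow> (nat \<Rightarrow> 's reaction) \<Rightarrow> bool" where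
  "execution R c0 cs as \<longleftrightarrow> cs 0 = c0 \<and>
     (\<forall>t. as t \<in> R \<and> applicable (as t) (cs t) \<and> cs (Suc t) = result (as t) (cs t))"

definition weakly_fair :: "('s::finite) reaction set \<Rightarrow> (nat \<Rightarrow> 's config) \<Rightarrow> (nat \<Rightarrow> 's reaction) \<Rightarrow> bool" where
  "weakly_fair R cs as \<longleftrightarrow>
     (\<forall>t. \<forall>\<alpha>\<in>R. applicable \<alpha> (cs t) \<longrightarrow> (\<exists>t'\<ge>t. as t' = \<alpha> \<or> \<not> applicable \<alpha> (cs t')))"

definition correct :: "mode \<Rightarrow> ('s::finite) reaction set \<Rightarrow> ('s \<Rightarrow> 'u) \<Rightarrow> (('u \<Rightarrow> nat) \<times> ('u \<Rightarrow> nat)) set \<Rightarrow> bool" where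
  "correct x R \<mu> Cr \<longleftrightarrow> (\<forall>c0 cs as. valid \<mu> Cr c0 \<and> execution R c0 cs as \<and> weakly_fair R cs as
       \<longrightarrow> (\<exists>t. cs t \<in> target x R (Zset \<mu> Cr c0)))"

(* For a reaction (r,p):
   r = A      : c(A) / |R(r)|
   r = 2A     : (1/phi) * binom(c(A),2) / |R(r)|
   r = A + B  : (1/phi) * c(A) c(B) / |R(r)|
   uniformly written as (1 or 1/phi) * prod_A binom(c(A), r(A)) / |R(r)|. *)
definition propensity :: "('s::finite) reaction set \<Rightarrow> real \<Rightarrow> 's config \<Rightarrow> 's reaction \<Rightarrow> real" where
  "propensity R \<phi> c \<alpha> =
     (if norm1 (fst \<alpha>) = 1 then 1 else 1 / \<phi>)
     * (\<Prod>A\<in>UNIV. real (c A choose fst \<alpha> A))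
     / real (card (reactions_of R (fst \<alpha>)))"

definition ptot :: "('s::finite) reaction set \<Rightarrow> real \<Rightarrow> 's config \<Rightarrow> real" where
  "ptot R \<phi> c = (\<Sum>\<alpha>\<in>R. propensity R \<phi> c \<alpha>)"

definition tau :: "('s::finite) reaction set \<Rightarrow> (nat \<Rightarrow> 's config) \<Rightarrow> (nat \<Rightarrow> 's reaction) \<Rightarrow> nat \<Rightarrow> 's reaction set \<Rightarrow> nat" where
  "tau R cs as t Q = (LEAST s. t < s \<and> (as (s - 1) \<in> Q \<or> Q \<subseteq> (\<Union>t'\<in>{t..s}. inapp R (cs t'))))"

(* Expected total time span of steps 0 .. tau(eta_r,0,Q)-1 of the stochastic
   execution eta_r, truncated to horizon k.  Arguments: current configuration c
   and Qr = Q minus the reactions of Q that were inapplicable at some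
   configuration so far.  One step: pay the time span 1/pi_c, then choose alpha
   with probability pi_c(alpha)/pi_c; the stopping time has occurred iff
   alpha \<in> Q or every reaction of Q has been inapplicable at some configuration
   up to the new one. *)
fun TCk :: "('s::finite) reaction set \<Rightarrow> real \<Rightarrow> 's reaction set \<Rightarrow> nat \<Rightarrow> 's config \<Rightarrow> 's reaction set \<Rightarrow> ennreal" where
  "TCk R \<phi> Q 0 c Qr = 0"
| "TCk R \<phi> Q (Suc k) c Qr =
     ennreal (1 / ptot R \<phi> c)
     + (\<Sum>\<alpha>\<in>R. ennreal (propensity R \<phi> c \<alpha> / ptot R \<phi> c) *
          (if \<alpha> \<in> Q \<or> Qr - inapp R (result \<alpha> c) = {} then 0
           else TCk R \<phi> Q k (result \<alpha> c) (Qr - inapp R (result \<alpha> c))))"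

(* TC^rho(c) with Q = rho(c): expectation = limit of the horizon-truncated
   expectations (monotone convergence). *)
definition TC :: "('s::finite) reaction set \<Rightarrow> real \<Rightarrow> 's reaction set \<Rightarrow> 's config \<Rightarrow> ennreal" where
  "TC R \<phi> Q c = (SUP k. TCk R \<phi> Q k c (Q - inapp R c))"

definition runtime_policy :: "('s::finite) reaction set \<Rightarrow> ('s config \<Rightarrow> 's reaction set) \<Rightarrow> bool" where
  "runtime_policy R \<rho> \<longleftrightarrow> (\<forall>c. \<rho> c \<subseteq> NV R)"

definition skipping_policy :: "(nat \<Rightarrow> nat) \<Rightarrow> bool" where
  "skipping_policy \<sigma> \<longleftrightarrow> (\<forall>t. t \<le> \<sigma> t)"

fun rstart :: "('s::finite) reaction set \<Rightarrow> (nat \<Rightarrow> 's config) \<Rightarrow> (nat \<Rightarrow> 's reaction)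
     \<Rightarrow> ('s config \<Rightarrow> 's reaction set) \<Rightarrow> (nat \<Rightarrow> nat) \<Rightarrow> nat \<Rightarrow> nat" where
  "rstart R cs as \<rho> \<sigma> 0 = 0"
| "rstart R cs as \<rho> \<sigma> (Suc i) =
     tau R cs as (\<sigma> (rstart R cs as \<rho> \<sigma> i)) (\<rho> (cs (\<sigma> (rstart R cs as \<rho> \<sigma> i))))"

definition RT :: "mode \<Rightarrow> ('s::finite) reaction set \<Rightarrow> ('s \<Rightarrow> 'u) \<Rightarrow> (('u \<Rightarrow> nat) \<times> ('u \<Rightarrow> nat)) set
     \<Rightarrow> (nat \<Rightarrow> real) \<Rightarrow> ('s config \<Rightarrow> 's reaction set) \<Rightarrow> (nat \<Rightarrow> nat)
     \<Rightarrow> (nat \<Rightarrow> 's config) \<Rightarrow> (nat \<Rightarrow> 's reaction) \<Rightarrow> ennreal" where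
  "RT x R \<mu> Cr \<phi> \<rho> \<sigma> cs as =
     (let tstar = (LEAST t. cs t \<in> target x R (Zset \<mu> Cr (cs 0)));
          istar = (LEAST i. tstar \<le> rstart R cs as \<rho> \<sigma> i);
          e = (\<lambda>i. cs (\<sigma> (rstart R cs as \<rho> \<sigma> i)))
      in \<Sum>i<istar. TC R (\<phi> (norm1 (cs 0))) (\<rho> (e i)) (e i))"

definition pitfall :: "mode \<Rightarrow> ('s::finite) reaction set \<Rightarrow> ('s \<Rightarrow> 'u) \<Rightarrow> (('u \<Rightarrow> nat) \<times> ('u \<Rightarrow> nat)) set
     \<Rightarrow> real \<Rightarrow> real \<Rightarrow> 's config \<Rightarrow> 's config \<Rightarrow> bool" where
  "pitfall x R \<mu> Cr \<phi> s c0 c \<longleftrightarrow> valid \<mu> Cr c0 \<and> reach R c0 c \<and>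
     (\<forall>k cs as. cs 0 = c
        \<and> (\<forall>i<k. as i \<in> R \<and> applicable (as i) (cs i) \<and> cs (Suc i) = result (as i) (cs i))
        \<and> cs k \<in> target x R (Zset \<mu> Cr c0)
        \<longrightarrow> (\<exists>i<k. propensity R \<phi> (cs i) (as i) \<le> s / \<phi>))"

definition speed_fault :: "mode \<Rightarrow> ('s::finite) reaction set \<Rightarrow> ('s \<Rightarrow> 'u) \<Rightarrow> (('u \<Rightarrow> nat) \<times> ('u \<Rightarrow> nat)) set
     \<Rightarrow> (nat \<Rightarrow> real) \<Rightarrow> 's config set \<Rightarrow> bool" where
  "speed_fault x R \<mu> Cr \<phi> C0 \<longleftrightarrow>
     (\<exists>s>0. \<forall>n0>0. \<exists>c0\<in>C0. n0 \<le> norm1 c0 \<and> (\<exists>c. pitfall x R \<mu> Cr (\<phi> (norm1 c0)) s c0 c))"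

end

theory Submission
  imports Defs
begin

definition stepE :: "(('s::finite) config \<Rightarrow> 's reaction \<Rightarrow> bool) \<Rightarrow> 's config \<Rightarrow> 's config \<Rightarrow> bool" where
  "stepE E x y \<longleftrightarrow> (\<exists>\<alpha>. E x \<alpha> \<and> y = result \<alpha> x)"

definition pth :: "(('s::finite) config \<Rightarrow> 's reaction \<Rightarrow> bool) \<Rightarrow> 's config \<Rightarrow> 's config \<Rightarrow> nat
   \<Rightarrow> (nat \<Rightarrow> 's config) \<Rightarrow> (nat \<Rightarrow> 's reaction) \<Rightarrow> bool" where
  "pth E x y k cs as \<longleftrightarrow> cs 0 = x \<and> cs k = y \<and> (\<forall>i<k. E (cs i) (as i) \<and> cs (Suc i) = result (as i) (cs i))"

definition E0 :: "('s::finite) reaction set \<Rightarrow> 's config \<Rightarrow> 's reaction \<Rightarrow> bool" where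
  "E0 R c \<alpha> \<longleftrightarrow> \<alpha> \<in> R \<and> applicable \<alpha> c"

lemma reach_eq: "reach R = (stepE (E0 R))\<^sup>*\<^sup>*"
proof -
  have "step R = stepE (E0 R)"
    by (intro ext) (auto simp: step_def stepE_def E0_def)
  then show ?thesis by (simp add: reach_def)
qed

lemma rtranclp_pth:
  assumes "(stepE E)\<^sup>*\<^sup>* x y"
  shows "\<exists>k cs as. pth E x y k cs as"
  using assms
proof (induction rule: rtranclp_induct)
  case base
  show ?case by (rule exI[of _ 0], rule exI[of _ "\<lambda>_. x"]) (auto simp: pth_def)
next
  case (step y z)
  then obtain k cs as where p: "pth E x y k cs as" by blast
  from step(2) obtain \<alpha> where a: "E y \<alpha>" "z = result \<alpha> y" by (auto simp: stepE_def)
  define cs' where "cs' = cs(Suc k := z)"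
  define as' where "as' = as(k := \<alpha>)"
  have "pth E x z (Suc k) cs' as'"
    unfolding pth_def
  proof (intro conjI)
    show "cs' 0 = x" using p by (simp add: pth_def cs'_def)
    show "cs' (Suc k) = z" by (simp add: cs'_def)
    show "\<forall>i<Suc k. E (cs' i) (as' i) \<and> cs' (Suc i) = result (as' i) (cs' i)"
    proof (intro allI impI)
    fix i assume "i < Suc k"
    then consider "i < k" | "i = k" by linarith
    then show "E (cs' i) (as' i) \<and> cs' (Suc i) = result (as' i) (cs' i)"
    proof cases
      case 1 then show ?thesis using p by (auto simp: pth_def cs'_def as'_def)
    next
      case 2 then show ?thesis using p a by (auto simp: pth_def cs'_def as'_def)
    qed
  qed
  qed
  then show ?case by blast
qed

lemma pth_rtranclp:
  assumes "pth E x y k cs as" "j \<le> k"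
  shows "(stepE E)\<^sup>*\<^sup>* x (cs j) \<and> (stepE E)\<^sup>*\<^sup>* (cs j) y"
proof -
  have st: "stepE E (cs i) (cs (Suc i))" if "i < k" for i
    using assms(1) that unfolding pth_def stepE_def by blast
  have A: "(stepE E)\<^sup>*\<^sup>* (cs 0) (cs j)" if "j \<le> k" for j
    using that
  proof (induction j)
    case 0 then show ?case by simp
  next
    case (Suc j) then show ?case using st[of j] by (meson Suc_le_lessD less_imp_le_nat rtranclp.rtrancl_into_rtrancl)
  qed
  have B: "(stepE E)\<^sup>*\<^sup>* (cs (k - m)) (cs k)" if "m \<le> k" for m
    using that
  proof (induction m)
    case 0 then show ?case by simp
  next
    case (Suc m)
    have "k - Suc m < k" using Suc by linarith
    then have "stepE E (cs (k - Suc m)) (cs (Suc (k - Suc m)))" by (rule st)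
    moreover have "Suc (k - Suc m) = k - m" using Suc by linarith
    ultimately show ?case using Suc by (metis Suc_leD converse_rtranclp_into_rtranclp)
  qed
  show ?thesis using A[OF assms(2)] B[of "k - j"] assms by (auto simp: pth_def)
qed

lemma pth_mono:
  assumes "pth E x y k cs as" "\<And>c \<alpha>. E c \<alpha> \<Longrightarrow> E' c \<alpha>"
  shows "pth E' x y k cs as"
  using assms unfolding pth_def by blast

definition cat_cs :: "nat \<Rightarrow> (nat \<Rightarrow> 'c) \<Rightarrow> (nat \<Rightarrow> 'c) \<Rightarrow> nat \<Rightarrow> 'c" where
  "cat_cs k f g = (\<lambda>i. if i \<le> k then f i else g (i - k))"
definition cat_as :: "nat \<Rightarrow> (nat \<Rightarrow> 'c) \<Rightarrow> (nat \<Rightarrow> 'c) \<Rightarrow> nat \<Rightarrow> 'c" where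
  "cat_as k f g = (\<lambda>i. if i < k then f i else g (i - k))"

lemma pth_append:
  assumes "pth E x y k1 cs1 as1" "pth E y z k2 cs2 as2"
  shows "pth E x z (k1 + k2) (cat_cs k1 cs1 cs2) (cat_as k1 as1 as2)"
  unfolding pth_def
proof (intro conjI)
  show "cat_cs k1 cs1 cs2 0 = x" using assms(1) by (simp add: pth_def cat_cs_def)
  show "cat_cs k1 cs1 cs2 (k1 + k2) = z" using assms by (auto simp: pth_def cat_cs_def)
  show "\<forall>i<k1 + k2. E (cat_cs k1 cs1 cs2 i) (cat_as k1 as1 as2 i) \<and>
         cat_cs k1 cs1 cs2 (Suc i) = result (cat_as k1 as1 as2 i) (cat_cs k1 cs1 cs2 i)"
  proof (intro allI impI)
  fix i assume i: "i < k1 + k2"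
  consider "i < k1" | "k1 \<le> i" by linarith
  then show "E (cat_cs k1 cs1 cs2 i) (cat_as k1 as1 as2 i) \<and>
         cat_cs k1 cs1 cs2 (Suc i) = result (cat_as k1 as1 as2 i) (cat_cs k1 cs1 cs2 i)"
  proof cases
    case 1 then show ?thesis using assms(1) by (auto simp: pth_def cat_cs_def cat_as_def)
  next
    case 2
    then have "i - k1 < k2" using i by linarith
    moreover have "Suc i - k1 = Suc (i - k1)" using 2 by linarith
    ultimately show ?thesis using assms 2 by (auto simp: pth_def cat_cs_def cat_as_def)
  qed
  qed
qed

lemma pth_cycle:
  assumes "pth E x x w cs as" "0 < w"
  shows "pth E x x (M * w) (\<lambda>i. cs (i mod w)) (\<lambda>i. as (i mod w))"
  unfolding pth_def
proof (intro conjI)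
  show "cs (0 mod w) = x" using assms by (simp add: pth_def)
  show "cs (M * w mod w) = x" using assms by (simp add: pth_def)
  show "\<forall>i<M * w. E (cs (i mod w)) (as (i mod w)) \<and> cs (Suc i mod w) = result (as (i mod w)) (cs (i mod w))"
  proof (intro allI impI)
  fix i assume "i < M * w"
  have lt: "i mod w < w" using assms(2) by simp
  then have E: "E (cs (i mod w)) (as (i mod w)) \<and> cs (Suc (i mod w)) = result (as (i mod w)) (cs (i mod w))"
    using assms(1) by (auto simp: pth_def)
  show "E (cs (i mod w)) (as (i mod w)) \<and> cs (Suc i mod w) = result (as (i mod w)) (cs (i mod w))"
  proof (cases "Suc (i mod w) = w")
    case True
    then have "Suc i mod w = 0" by (metis mod_Suc)
    then show ?thesis using E True assms(1) by (auto simp: pth_def)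
  next
    case False
    then have "Suc i mod w = Suc (i mod w)" by (metis mod_Suc)
    then show ?thesis using E by simp
  qed
  qed
qed

definition Ef :: "('s::finite) reaction set \<Rightarrow> real \<Rightarrow> real \<Rightarrow> 's config \<Rightarrow> 's reaction \<Rightarrow> bool" where
  "Ef R \<phi>v s c \<alpha> \<longleftrightarrow> \<alpha> \<in> R \<and> applicable \<alpha> c \<and> s / \<phi>v < propensity R \<phi>v c \<alpha>"

lemma Ef_E0: "Ef R \<phi>v s c \<alpha> \<Longrightarrow> E0 R c \<alpha>"
  by (simp add: Ef_def E0_def)

lemma norm1_result_ge:
  assumes "crn_protocol R" "\<alpha> \<in> R" "applicable \<alpha> c"
  shows "norm1 c \<le> norm1 (result \<alpha> c)"
proof -
  obtain r p where a: "\<alpha> = (r, p)" by (cases \<alpha>)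
  have rp: "norm1 r \<le> norm1 p" using assms(1,2) a unfolding crn_protocol_def by fastforce
  have le: "r A \<le> c A" for A using assms(3) a by (auto simp: applicable_def le_fun_def)
  have "norm1 (result \<alpha> c) + norm1 r = (\<Sum>A\<in>UNIV. c A - r A + p A + r A)"
    by (simp add: norm1_def result_def a sum.distrib)
  also have "\<dots> = (\<Sum>A\<in>UNIV. c A + p A)"
  proof (intro sum.cong refl)
    fix A show "c A - r A + p A + r A = c A + p A" using le[of A] by linarith
  qed
  also have "\<dots> = norm1 c + norm1 p" by (simp add: norm1_def sum.distrib)
  finally show ?thesis using rp by linarith
qed

lemma reach_norm_mono:
  assumes "crn_protocol R" "reach R c c'"
  shows "norm1 c \<le> norm1 c'"
  using assms(2) unfolding reach_def
proof (induction rule: rtranclp_induct)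
  case base then show ?case by simp
next
  case (step y z)
  then show ?case using norm1_result_ge[OF assms(1)] by (fastforce simp: step_def)
qed

lemma prop_nonneg: "0 < \<phi>v \<Longrightarrow> 0 \<le> propensity R \<phi>v c \<alpha>"
  unfolding propensity_def by (auto intro!: divide_nonneg_nonneg mult_nonneg_nonneg prod_nonneg)

lemma prop_inapp: "\<not> applicable \<alpha> c \<Longrightarrow> propensity R \<phi>v c \<alpha> = 0"
proof -
  assume "\<not> applicable \<alpha> c"
  then obtain A where "c A < fst \<alpha> A" by (auto simp: applicable_def le_fun_def not_le)
  then have "(\<Prod>A\<in>UNIV. real (c A choose fst \<alpha> A)) = 0"
    by (intro prod_zero) auto
  then show ?thesis by (simp add: propensity_def)
qed

lemma unimol_exists:
  assumes "crn_protocol R" "1 \<le> norm1 c"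
  shows "\<exists>\<alpha>\<in>R. applicable \<alpha> c \<and> 1 / real (card R) \<le> propensity R \<phi>v c \<alpha>"
proof -
  obtain X where X: "1 \<le> c X"
  proof (rule ccontr)
    assume "\<not> thesis"
    then have "\<forall>A. c A = 0" using that by (metis less_one not_le)
    then have "norm1 c = 0" by (simp add: norm1_def)
    then show False using assms(2) by simp
  qed
  define r where "r = (\<lambda>A. if A = X then 1 else (0::nat))"
  have nr: "norm1 r = 1" unfolding norm1_def r_def by simp
  have fin: "finite R" using assms(1) by (simp add: crn_protocol_def)
  have "reactions_of R r \<noteq> {}" using assms(1) nr unfolding crn_protocol_def by auto
  then obtain \<alpha> where a: "\<alpha> \<in> R" "fst \<alpha> = r" by (auto simp: reactions_of_def)
  have app: "applicable \<alpha> c" using a X by (auto simp: applicable_def le_fun_def r_def)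
  have "(\<Prod>A\<in>UNIV. real (c A choose fst \<alpha> A)) = (\<Prod>A\<in>UNIV. if A = X then real (c X) else 1)"
    by (intro prod.cong) (auto simp: a r_def)
  also have "\<dots> = real (c X)" by (simp add: prod.delta)
  finally have P: "(\<Prod>A\<in>UNIV. real (c A choose fst \<alpha> A)) = real (c X)" .
  have sub: "reactions_of R r \<subseteq> R" by (auto simp: reactions_of_def)
  have c1: "card (reactions_of R r) \<le> card R" using card_mono[OF fin sub] .
  have c2: "0 < card (reactions_of R r)"
    using a fin sub by (metis (mono_tags, lifting) card_gt_0_iff empty_iff finite_subset mem_Collect_eq reactions_of_def)
  have "propensity R \<phi>v c \<alpha> = real (c X) / real (card (reactions_of R r))"
    using P by (simp add: propensity_def a nr)
  also have "\<dots> \<ge> 1 / real (card R)"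
    using c1 c2 X by (intro frac_le) auto
  finally show ?thesis using a app by blast
qed

lemma finite_bounded: "finite {c::('s::finite) config. norm1 c \<le> N}"
proof -
  have "{c::'s config. norm1 c \<le> N} \<subseteq> Pi\<^sub>E UNIV (\<lambda>_. {..N})"
  proof
    fix c :: "'s config" assume "c \<in> {c. norm1 c \<le> N}"
    then have "c A \<le> N" for A
      using member_le_sum[of A UNIV c] by (simp add: norm1_def)
    then show "c \<in> Pi\<^sub>E UNIV (\<lambda>_. {..N})" by (simp add: PiE_UNIV_domain)
  qed
  moreover have "finite (Pi\<^sub>E (UNIV::'s set) (\<lambda>_. {..N}))" by (intro finite_PiE) auto
  ultimately show ?thesis by (rule finite_subset)
qed

lemma target_closed:
  assumes "c \<in> target x R Z" "reach R c c'"
  shows "c' \<in> target x R Z"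
proof (cases x)
  case Stab
  then show ?thesis using assms unfolding target_def stab_def reach_def
    by (auto intro: rtranclp_trans)
next
  case Halt
  then show ?thesis using assms unfolding target_def halt_def reach_def
    by auto
qed

lemma prop_le_ptot:
  assumes "finite R" "\<alpha> \<in> R" "0 < \<phi>v"
  shows "propensity R \<phi>v c \<alpha> \<le> ptot R \<phi>v c"
  unfolding ptot_def using assms prop_nonneg
  by (intro member_le_sum) auto

lemma TC_ge_inv: "ennreal (1 / ptot R \<phi>v c) \<le> TC R \<phi>v Q c"
proof -
  have "TCk R \<phi>v Q (Suc 0) c (Q - inapp R c) = ennreal (1 / ptot R \<phi>v c)"
    by (simp only: TCk.simps if_cancel mult_zero_right sum.neutral_const add_0_right)
  moreover have "TCk R \<phi>v Q (Suc 0) c (Q - inapp R c) \<le> TC R \<phi>v Q c"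
    unfolding TC_def by (rule SUP_upper) simp
  ultimately show ?thesis by simp
qed

lemma TCk_trapped:
  assumes fin: "finite R"
    and phi: "0 < \<phi>v"
    and haz: "\<forall>e\<in>B. (\<Sum>\<alpha>\<in>{\<alpha>\<in>R. applicable \<alpha> e \<and> (\<alpha> \<in> Q \<or> result \<alpha> e \<notin> B)}. propensity R \<phi>v e \<alpha>) \<le> h"
    and hpos: "0 < h"
    and Pm: "\<forall>e\<in>B. 0 < ptot R \<phi>v e \<and> ptot R \<phi>v e \<le> Pm"
    and beta: "\<forall>e\<in>B. applicable \<beta> e"
  shows "e \<in> B \<Longrightarrow> \<beta> \<in> Qr \<Longrightarrow> ennreal (min (1/(2*h)) (real k / (2*Pm))) \<le> TCk R \<phi>v Q k e Qr"
proof (induction k arbitrary: e Qr)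
  case 0
  have "min (1/(2*h)) (real 0 / (2*Pm)) = 0" using hpos by simp
  then show ?case by simp
next
  case (Suc k)
  define g where "g = min (1/(2*h)) (real k / (2*Pm))"
  define P where "P = ptot R \<phi>v e"
  define p where "p = (\<lambda>\<alpha>. propensity R \<phi>v e \<alpha>)"
  define G where "G = {\<alpha>\<in>R. applicable \<alpha> e \<and> \<not> (\<alpha> \<in> Q \<or> result \<alpha> e \<notin> B)}"
  define Bd where "Bd = {\<alpha>\<in>R. applicable \<alpha> e \<and> (\<alpha> \<in> Q \<or> result \<alpha> e \<notin> B)}"
  have Pm0: "0 < Pm" using Pm Suc.prems by force
  have P0: "0 < P" "P \<le> Pm" using Pm Suc.prems by (auto simp: P_def)
  have g0: "0 \<le> g" using hpos Pm0 by (simp add: g_def)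
  have gh: "h * g \<le> 1/2" using hpos by (simp add: g_def min_def field_simps)
  have pnn: "0 \<le> p \<alpha>" for \<alpha> using phi by (simp add: p_def prop_nonneg)
  define f where "f = (\<lambda>\<alpha>. ennreal (propensity R \<phi>v e \<alpha> / ptot R \<phi>v e) *
          (if \<alpha> \<in> Q \<or> Qr - inapp R (result \<alpha> e) = {} then 0
           else TCk R \<phi>v Q k (result \<alpha> e) (Qr - inapp R (result \<alpha> e))))"
  have TCeq: "TCk R \<phi>v Q (Suc k) e Qr = ennreal (1 / P) + (\<Sum>\<alpha>\<in>R. f \<alpha>)"
    by (simp add: f_def P_def)
  have fG: "ennreal (p \<alpha> / P * g) \<le> f \<alpha>" if "\<alpha> \<in> G" for \<alpha>
  proof -
    have a: "\<alpha> \<notin> Q" "result \<alpha> e \<in> B" using that by (auto simp: G_def)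
    then have "applicable \<beta> (result \<alpha> e)" using beta by blast
    then have b: "\<beta> \<in> Qr - inapp R (result \<alpha> e)" using Suc.prems by (auto simp: inapp_def)
    then have "ennreal g \<le> TCk R \<phi>v Q k (result \<alpha> e) (Qr - inapp R (result \<alpha> e))"
      using Suc.IH[OF a(2)] g_def by blast
    then have "ennreal (p \<alpha> / P) * ennreal g \<le> f \<alpha>"
      using a b unfolding f_def p_def P_def by (auto intro: mult_left_mono)
    moreover have "ennreal (p \<alpha> / P) * ennreal g = ennreal (p \<alpha> / P * g)"
      by (rule ennreal_mult[symmetric]) (use pnn P0 g0 in auto)
    ultimately show ?thesis by simp
  qed
  have "(\<Sum>\<alpha>\<in>G. ennreal (p \<alpha> / P * g)) \<le> (\<Sum>\<alpha>\<in>G. f \<alpha>)" using fG by (rule sum_mono)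
  also have "\<dots> \<le> (\<Sum>\<alpha>\<in>R. f \<alpha>)" using fin by (intro sum_mono2) (auto simp: G_def)
  finally have S1: "ennreal ((\<Sum>\<alpha>\<in>G. p \<alpha>) / P * g) \<le> (\<Sum>\<alpha>\<in>R. f \<alpha>)"
    using pnn P0 g0 by (simp add: sum_ennreal sum_divide_distrib[symmetric] sum_distrib_right[symmetric])
  have split: "p \<alpha> = (if \<alpha> \<in> G then p \<alpha> else 0) + (if \<alpha> \<in> Bd then p \<alpha> else 0)" if "\<alpha> \<in> R" for \<alpha>
    using that by (auto simp: G_def Bd_def p_def prop_inapp)
  have "P = (\<Sum>\<alpha>\<in>R. p \<alpha>)" by (simp add: P_def ptot_def p_def)
  also have "\<dots> = (\<Sum>\<alpha>\<in>R. (if \<alpha> \<in> G then p \<alpha> else 0) + (if \<alpha> \<in> Bd then p \<alpha> else 0))"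
    using split by (intro sum.cong) auto
  also have "\<dots> = (\<Sum>\<alpha>\<in>G. p \<alpha>) + (\<Sum>\<alpha>\<in>Bd. p \<alpha>)"
  proof -
    have g1: "G = {\<alpha>\<in>R. \<alpha> \<in> G}" "Bd = {\<alpha>\<in>R. \<alpha> \<in> Bd}" by (auto simp: G_def Bd_def)
    have "sum p G = (\<Sum>\<alpha>\<in>R. if \<alpha> \<in> G then p \<alpha> else 0)"
      using sum.inter_filter[OF fin, of p "\<lambda>\<alpha>. \<alpha> \<in> G"] g1(1) by simp
    moreover have "sum p Bd = (\<Sum>\<alpha>\<in>R. if \<alpha> \<in> Bd then p \<alpha> else 0)"
      using sum.inter_filter[OF fin, of p "\<lambda>\<alpha>. \<alpha> \<in> Bd"] g1(2) by simp
    ultimately show ?thesis by (simp add: sum.distrib)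
  qed
  finally have PS: "P = (\<Sum>\<alpha>\<in>G. p \<alpha>) + (\<Sum>\<alpha>\<in>Bd. p \<alpha>)" .
  have SB: "(\<Sum>\<alpha>\<in>Bd. p \<alpha>) \<le> h" using haz Suc.prems by (simp add: Bd_def p_def)
  have SG: "P - h \<le> (\<Sum>\<alpha>\<in>G. p \<alpha>)" using PS SB by linarith
  have key: "g + 1/(2*Pm) \<le> 1/P + (\<Sum>\<alpha>\<in>G. p \<alpha>) / P * g"
  proof -
    have "(P - h) * g \<le> (\<Sum>\<alpha>\<in>G. p \<alpha>) * g" using SG g0 by (rule mult_right_mono)
    then have "1/P + (P - h) * g / P \<le> 1/P + (\<Sum>\<alpha>\<in>G. p \<alpha>) / P * g"
      using P0 by (simp add: divide_right_mono)
    moreover have "1/P + (P - h) * g / P = g + (1 - h*g)/P" using P0 by (simp add: field_simps)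
    moreover have "(1/2)/P \<le> (1 - h*g)/P" using gh P0 by (intro divide_right_mono) auto
    moreover have "1/(2*Pm) \<le> (1/2)/P" using P0 by (simp add: field_simps)
    ultimately show ?thesis by linarith
  qed
  have mn: "min (1/(2*h)) (real (Suc k) / (2*Pm)) \<le> g + 1/(2*Pm)"
    unfolding g_def using Pm0 by (auto simp: min_def field_simps)
  have "ennreal (min (1/(2*h)) (real (Suc k) / (2*Pm))) \<le> ennreal (1/P + (\<Sum>\<alpha>\<in>G. p \<alpha>) / P * g)"
    using mn key by (intro ennreal_leI) linarith
  also have "\<dots> = ennreal (1/P) + ennreal ((\<Sum>\<alpha>\<in>G. p \<alpha>) / P * g)"
    using P0 g0 pnn by (intro ennreal_plus) (auto intro!: sum_nonneg mult_nonneg_nonneg divide_nonneg_nonneg)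
  also have "\<dots> \<le> TCk R \<phi>v Q (Suc k) e Qr"
    unfolding TCeq using S1 by (rule add_left_mono)
  finally show ?case .
qed

lemma TC_trapped:
  assumes fin: "finite R"
    and phi: "0 < \<phi>v"
    and haz: "\<forall>e\<in>B. (\<Sum>\<alpha>\<in>{\<alpha>\<in>R. applicable \<alpha> e \<and> (\<alpha> \<in> Q \<or> result \<alpha> e \<notin> B)}. propensity R \<phi>v e \<alpha>) \<le> h"
    and hpos: "0 < h"
    and Pm: "\<forall>e\<in>B. 0 < ptot R \<phi>v e \<and> ptot R \<phi>v e \<le> Pm"
    and beta: "\<forall>e\<in>B. applicable \<beta> e" "\<beta> \<in> Q"
    and e: "e \<in> B"
  shows "ennreal (1/(2*h)) \<le> TC R \<phi>v Q e"
proof -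
  have Pm0: "0 < Pm" using Pm e by force
  define k where "k = nat \<lceil>Pm / h\<rceil>"
  have "Pm / h \<le> real k" unfolding k_def by linarith
  then have "1/(2*h) \<le> real k / (2*Pm)" using hpos Pm0 by (simp add: field_simps)
  then have "min (1/(2*h)) (real k / (2*Pm)) = 1/(2*h)" by simp
  moreover have "\<beta> \<in> Q - inapp R e" using beta e by (auto simp: inapp_def)
  ultimately have "ennreal (1/(2*h)) \<le> TCk R \<phi>v Q k e (Q - inapp R e)"
    using TCk_trapped[OF fin phi haz hpos Pm beta(1) e] by metis
  also have "\<dots> \<le> TC R \<phi>v Q e" unfolding TC_def by (rule SUP_upper) simp
  finally show ?thesis .
qed

lemma tau_exists:
  assumes wf: "weakly_fair R cs as" and QR: "Q \<subseteq> R" and fin: "finite R"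
  shows "\<exists>s. t < s \<and> (as (s - 1) \<in> Q \<or> Q \<subseteq> (\<Union>t'\<in>{t..s}. inapp R (cs t')))"
proof -
  have each: "\<exists>t'\<ge>t. as t' = \<alpha> \<or> \<alpha> \<in> inapp R (cs t')" if "\<alpha> \<in> Q" for \<alpha>
  proof (cases "applicable \<alpha> (cs t)")
    case True
    then show ?thesis using wf that QR unfolding weakly_fair_def inapp_def by blast
  next
    case False
    then show ?thesis using that QR by (auto simp: inapp_def)
  qed
  show ?thesis
  proof (cases "\<exists>\<alpha>\<in>Q. \<exists>t'\<ge>t. as t' = \<alpha>")
    case True
    then obtain \<alpha> t' where "\<alpha> \<in> Q" "t' \<ge> t" "as t' = \<alpha>" by blast
    then show ?thesis by (intro exI[of _ "Suc t'"]) auto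
  next
    case False
    then have "\<forall>\<alpha>\<in>Q. \<exists>t'\<ge>t. \<alpha> \<in> inapp R (cs t')" using each by blast
    then obtain T where T: "\<forall>\<alpha>\<in>Q. T \<alpha> \<ge> t \<and> \<alpha> \<in> inapp R (cs (T \<alpha>))" by metis
    have fQ: "finite Q" using QR fin finite_subset by blast
    define s where "s = Suc (Max (insert t (T ` Q)))"
    have "T \<alpha> \<le> Max (insert t (T ` Q))" if "\<alpha> \<in> Q" for \<alpha> using fQ that by (intro Max_ge) auto
    then have "Q \<subseteq> (\<Union>t'\<in>{t..s}. inapp R (cs t'))"
    proof -
      assume M: "\<And>\<alpha>. \<alpha> \<in> Q \<Longrightarrow> T \<alpha> \<le> Max (insert t (T ` Q))"
      show ?thesis
      proof
        fix \<alpha> assume aQ: "\<alpha> \<in> Q"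
        have "T \<alpha> \<in> {t..s}" using M[OF aQ] T aQ unfolding s_def by simp
        moreover have "\<alpha> \<in> inapp R (cs (T \<alpha>))" using T aQ by blast
        ultimately show "\<alpha> \<in> (\<Union>t'\<in>{t..s}. inapp R (cs t'))" by blast
      qed
    qed
    moreover have "t < s" using fQ unfolding s_def by (simp add: le_imp_less_Suc)
    ultimately show ?thesis by blast
  qed
qed

lemma tau_gt:
  assumes "weakly_fair R cs as" "Q \<subseteq> R" "finite R"
  shows "t < tau R cs as t Q"
  using LeastI_ex[OF tau_exists[OF assms, of t]] unfolding tau_def by blast

lemma tau_le:
  assumes "t < s" "as (s - 1) \<in> Q \<or> Q \<subseteq> (\<Union>t'\<in>{t..s}. inapp R (cs t'))"
  shows "tau R cs as t Q \<le> s"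
  unfolding tau_def by (rule Least_le) (use assms in blast)

lemma rstart_Suc:
  assumes "weakly_fair R cs as" "runtime_policy R \<rho>" "skipping_policy \<sigma>" "finite R"
  shows "\<sigma> (rstart R cs as \<rho> \<sigma> i) < rstart R cs as \<rho> \<sigma> (Suc i)"
proof -
  have "\<rho> c \<subseteq> R" for c using assms(2) by (auto simp: runtime_policy_def NV_def)
  then show ?thesis using tau_gt[OF assms(1) _ assms(4)] by simp
qed

lemma rstart_ge:
  assumes "weakly_fair R cs as" "runtime_policy R \<rho>" "skipping_policy \<sigma>" "finite R"
  shows "i \<le> rstart R cs as \<rho> \<sigma> i"
proof (induction i)
  case 0 then show ?case by simp
next
  case (Suc i)
  have "rstart R cs as \<rho> \<sigma> i \<le> \<sigma> (rstart R cs as \<rho> \<sigma> i)" using assms(3) by (simp add: skipping_policy_def)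
  then show ?case using rstart_Suc[OF assms, of i] Suc by linarith
qed

definition fpick :: "('s::finite) reaction list \<Rightarrow> 's reaction set \<Rightarrow> nat \<Rightarrow> 's config \<Rightarrow> 's reaction" where
  "fpick rl R t c = (if applicable (rl ! (t mod length rl)) c then rl ! (t mod length rl)
                     else (SOME \<alpha>. \<alpha> \<in> R \<and> applicable \<alpha> c))"

fun fairrun :: "('s::finite) reaction list \<Rightarrow> 's reaction set \<Rightarrow> 's config \<Rightarrow> nat \<Rightarrow> 's config" where
  "fairrun rl R d 0 = d"
| "fairrun rl R d (Suc t) = result (fpick rl R t (fairrun rl R d t)) (fairrun rl R d t)"

lemma fair_exists:
  assumes prot: "crn_protocol R" and d: "1 \<le> norm1 d"
  shows "\<exists>cs as. execution R d cs as \<and> weakly_fair R cs as"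
proof -
  have fin: "finite R" using prot by (simp add: crn_protocol_def)
  obtain rl where rl: "set rl = R" using finite_list[OF fin] by blast
  obtain \<alpha>0 where "\<alpha>0 \<in> R" using unimol_exists[OF prot d] by blast
  then have m: "0 < length rl" using rl by (cases rl) auto
  define cs where "cs = fairrun rl R d"
  define as where "as = (\<lambda>t. fpick rl R t (cs t))"
  have cs0: "cs 0 = d" by (simp add: cs_def)
  have csS: "cs (Suc t) = result (as t) (cs t)" for t by (simp add: cs_def as_def)
  have pickok: "as t \<in> R \<and> applicable (as t) (cs t)" if n: "1 \<le> norm1 (cs t)" for t
  proof -
    have ex: "\<exists>\<alpha>. \<alpha> \<in> R \<and> applicable \<alpha> (cs t)" using unimol_exists[OF prot n] by blast
    have inR: "rl ! (t mod length rl) \<in> R" using rl m by auto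
    show ?thesis
    proof (cases "applicable (rl ! (t mod length rl)) (cs t)")
      case True
      then have "as t = rl ! (t mod length rl)" by (simp add: as_def fpick_def)
      then show ?thesis using True inR by simp
    next
      case False
      then have "as t = (SOME \<alpha>. \<alpha> \<in> R \<and> applicable \<alpha> (cs t))" by (simp add: as_def fpick_def)
      then show ?thesis using someI_ex[OF ex] by simp
    qed
  qed
  have inv: "1 \<le> norm1 (cs t)" for t
  proof (induction t)
    case 0 show ?case using d cs0 by simp
  next
    case (Suc t)
    have "norm1 (cs t) \<le> norm1 (cs (Suc t))"
      unfolding csS using pickok[OF Suc] norm1_result_ge[OF prot] by blast
    then show ?case using Suc by linarith
  qed
  have ex: "execution R d cs as"
    unfolding execution_def using inv pickok cs0 csS by blast
  have wf: "weakly_fair R cs as"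
    unfolding weakly_fair_def
  proof (intro allI ballI impI)
    fix t \<alpha> assume a: "\<alpha> \<in> R" "applicable \<alpha> (cs t)"
    obtain j where j: "j < length rl" "rl ! j = \<alpha>" using a rl by (metis in_set_conv_nth)
    define t' where "t' = length rl * Suc (t div length rl) + j"
    have "t < length rl * Suc (t div length rl)"
    proof -
      have e: "length rl * (t div length rl) + t mod length rl = t" by (rule mult_div_mod_eq)
      have "t mod length rl < length rl" using m by simp
      then show ?thesis unfolding mult_Suc_right using e by linarith
    qed
    then have tt: "t \<le> t'" unfolding t'_def by linarith
    have tm: "t' mod length rl = j" unfolding t'_def using j(1) by (simp only: mod_mult_self4 mod_less)
    have "as t' = \<alpha> \<or> \<not> applicable \<alpha> (cs t')"
    proof (cases "applicable \<alpha> (cs t')")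
      case True
      then have "as t' = rl ! (t' mod length rl)" using j tm by (simp add: as_def fpick_def)
      then show ?thesis using j tm by simp
    qed simp
    then show "\<exists>t'\<ge>t. as t' = \<alpha> \<or> \<not> applicable \<alpha> (cs t')" using tt by blast
  qed
  show ?thesis using ex wf by blast
qed

lemma exec_concat:
  assumes p: "pth (E0 R) x y k cs1 as1" and e: "execution R y cs2 as2"
  shows "execution R x (cat_cs k cs1 cs2) (cat_as k as1 as2)"
proof -
  have p0: "cs1 0 = x" and pk: "cs1 k = y" and ps: "\<And>i. i < k \<Longrightarrow> E0 R (cs1 i) (as1 i) \<and> cs1 (Suc i) = result (as1 i) (cs1 i)"
    using p unfolding pth_def by auto
  have e0: "cs2 0 = y" and es: "\<And>t. as2 t \<in> R \<and> applicable (as2 t) (cs2 t) \<and> cs2 (Suc t) = result (as2 t) (cs2 t)"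
    using e unfolding execution_def by auto
  have c: "cat_cs k cs1 cs2 t = cs2 (t - k)" if "k \<le> t" for t
  proof (cases "t = k")
    case True then show ?thesis using pk e0 by (simp add: cat_cs_def)
  next
    case False then show ?thesis using that by (simp add: cat_cs_def)
  qed
  show ?thesis
    unfolding execution_def
  proof (rule conjI)
    show "cat_cs k cs1 cs2 0 = x" using p0 by (simp add: cat_cs_def)
    show "\<forall>t. cat_as k as1 as2 t \<in> R \<and> applicable (cat_as k as1 as2 t) (cat_cs k cs1 cs2 t) \<and>
          cat_cs k cs1 cs2 (Suc t) = result (cat_as k as1 as2 t) (cat_cs k cs1 cs2 t)"
    proof (rule allI)
    fix t
    consider "t < k" | "k \<le> t" by linarith
    then show "cat_as k as1 as2 t \<in> R \<and> applicable (cat_as k as1 as2 t) (cat_cs k cs1 cs2 t) \<and>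
          cat_cs k cs1 cs2 (Suc t) = result (cat_as k as1 as2 t) (cat_cs k cs1 cs2 t)"
    proof cases
      case 1
      then have "cat_cs k cs1 cs2 t = cs1 t" "cat_cs k cs1 cs2 (Suc t) = cs1 (Suc t)" "cat_as k as1 as2 t = as1 t"
        by (simp_all add: cat_cs_def cat_as_def)
      then show ?thesis using ps[OF 1] by (simp add: E0_def)
    next
      case 2
      have "Suc t - k = Suc (t - k)" using 2 by linarith
      then have "cat_cs k cs1 cs2 t = cs2 (t - k)" "cat_cs k cs1 cs2 (Suc t) = cs2 (Suc (t - k))" "cat_as k as1 as2 t = as2 (t - k)"
        using c[OF 2] c[of "Suc t"] 2 by (simp_all add: cat_as_def)
      then show ?thesis using es[of "t - k"] by simp
    qed
    qed
  qed
qed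

lemma fair_concat:
  assumes p: "pth (E0 R) x y k cs1 as1" and e: "execution R y cs2 as2" and wf: "weakly_fair R cs2 as2"
  shows "weakly_fair R (cat_cs k cs1 cs2) (cat_as k as1 as2)"
proof -
  have pk: "cs1 k = y" using p unfolding pth_def by auto
  have e0: "cs2 0 = y" using e unfolding execution_def by auto
  have c: "cat_cs k cs1 cs2 t = cs2 (t - k)" if "k \<le> t" for t
  proof (cases "t = k")
    case True then show ?thesis using pk e0 by (simp add: cat_cs_def)
  next
    case False then show ?thesis using that by (simp add: cat_cs_def)
  qed
  have a: "cat_as k as1 as2 t = as2 (t - k)" if "k \<le> t" for t using that by (simp add: cat_as_def)
  have late: "\<exists>t'\<ge>t. cat_as k as1 as2 t' = \<alpha> \<or> \<not> applicable \<alpha> (cat_cs k cs1 cs2 t')"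
    if h1: "k \<le> t" and h2: "\<alpha> \<in> R" and h3: "applicable \<alpha> (cat_cs k cs1 cs2 t)" for t \<alpha>
  proof -
    have "applicable \<alpha> (cs2 (t - k))" using h1 h3 c by simp
    then obtain t'' where t'': "t'' \<ge> t - k" "as2 t'' = \<alpha> \<or> \<not> applicable \<alpha> (cs2 t'')"
      using wf h2 unfolding weakly_fair_def by blast
    have "cat_cs k cs1 cs2 (t'' + k) = cs2 t''" "cat_as k as1 as2 (t'' + k) = as2 t''"
      using c[of "t'' + k"] a[of "t'' + k"] by simp_all
    moreover have "t \<le> t'' + k" using t'' h1 by linarith
    ultimately show ?thesis using t''(2) by metis
  qed
  show ?thesis
    unfolding weakly_fair_def
  proof (intro allI ballI impI)
    fix t \<alpha> assume h: "\<alpha> \<in> R" "applicable \<alpha> (cat_cs k cs1 cs2 t)"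
    show "\<exists>t'\<ge>t. cat_as k as1 as2 t' = \<alpha> \<or> \<not> applicable \<alpha> (cat_cs k cs1 cs2 t')"
    proof (cases "k \<le> t")
      case True then show ?thesis using late h by blast
    next
      case False
      show ?thesis
      proof (cases "applicable \<alpha> (cat_cs k cs1 cs2 k)")
        case True
        then obtain t' where "t' \<ge> k" "cat_as k as1 as2 t' = \<alpha> \<or> \<not> applicable \<alpha> (cat_cs k cs1 cs2 t')"
          using late[of k \<alpha>] h by blast
        then show ?thesis using False by (metis le_trans nat_le_linear)
      next
        case False2: False
        then show ?thesis using False by (metis nat_le_linear)
      qed
    qed
  qed
qed

lemma bottom_scc:
  assumes U: "\<forall>e. r\<^sup>*\<^sup>* c e \<longrightarrow> e \<in> U" and fU: "finite U"
  shows "\<exists>d. r\<^sup>*\<^sup>* c d \<and> (\<forall>e. r\<^sup>*\<^sup>* d e \<longrightarrow> r\<^sup>*\<^sup>* e d)"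
proof -
  obtain d where d: "r\<^sup>*\<^sup>* c d" and min: "\<forall>e. r\<^sup>*\<^sup>* c e \<longrightarrow> card {e'. r\<^sup>*\<^sup>* d e'} \<le> card {e'. r\<^sup>*\<^sup>* e e'}"
    using ex_has_least_nat[of "\<lambda>e. r\<^sup>*\<^sup>* c e" c "\<lambda>e. card {e'. r\<^sup>*\<^sup>* e e'}"] by blast
  have "r\<^sup>*\<^sup>* e d" if e: "r\<^sup>*\<^sup>* d e" for e
  proof -
    have sub: "{e'. r\<^sup>*\<^sup>* e e'} \<subseteq> {e'. r\<^sup>*\<^sup>* d e'}" using e by (auto intro: rtranclp_trans)
    have fin: "finite {e'. r\<^sup>*\<^sup>* d e'}"
      using U d by (intro finite_subset[OF _ fU]) (auto intro: rtranclp_trans)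
    have "r\<^sup>*\<^sup>* c e" using d e by (rule rtranclp_trans)
    then have "card {e'. r\<^sup>*\<^sup>* d e'} \<le> card {e'. r\<^sup>*\<^sup>* e e'}" using min by blast
    then have "{e'. r\<^sup>*\<^sup>* e e'} = {e'. r\<^sup>*\<^sup>* d e'}" using card_subset_eq[OF fin sub] card_mono[OF fin sub] by linarith
    then show ?thesis by auto
  qed
  then show ?thesis using d by blast
qed

lemma cover_walk:
  assumes strong: "\<forall>e\<in>B. \<forall>e'\<in>B. (stepE E)\<^sup>*\<^sup>* e e'"
    and closed: "\<forall>e\<in>B. \<forall>\<alpha>. E e \<alpha> \<longrightarrow> result \<alpha> e \<in> B"
    and d: "d \<in> B"
  shows "(\<forall>p\<in>set ps. fst p \<in> B \<and> E (fst p) (snd p)) \<Longrightarrow> x \<in> B \<Longrightarrow>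
     \<exists>k cs as. pth E x d k cs as \<and> (\<forall>p\<in>set ps. \<exists>j<k. cs j = fst p \<and> as j = snd p)"
proof (induction ps arbitrary: x)
  case Nil
  then show ?case using strong d rtranclp_pth by fastforce
next
  case (Cons p ps)
  obtain e \<alpha> where p: "p = (e, \<alpha>)" by (cases p)
  have eB: "e \<in> B" "E e \<alpha>" using Cons.prems p by auto
  define e1 where "e1 = result \<alpha> e"
  have e1B: "e1 \<in> B" using closed eB e1_def by blast
  obtain k1 cs1 as1 where P1: "pth E x e k1 cs1 as1"
    using strong Cons.prems(2) eB rtranclp_pth by blast
  have P2: "pth E e e1 1 (\<lambda>i. if i = 0 then e else e1) (\<lambda>_. \<alpha>)"
    using eB by (simp add: pth_def e1_def)
  obtain k2 cs2 as2 where P3: "pth E e1 d k2 cs2 as2" and cov: "\<forall>p\<in>set ps. \<exists>j<k2. cs2 j = fst p \<and> as2 j = snd p"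
    using Cons.IH[OF _ e1B] Cons.prems(1) by auto
  define CS where "CS = cat_cs k1 cs1 (cat_cs 1 (\<lambda>i. if i = 0 then e else e1) cs2)"
  define AS where "AS = cat_as k1 as1 (cat_as 1 (\<lambda>_. \<alpha>) as2)"
  have P: "pth E x d (k1 + (1 + k2)) CS AS"
    unfolding CS_def AS_def by (intro pth_append[OF P1 pth_append[OF P2 P3]])
  have c1: "CS k1 = e \<and> AS k1 = \<alpha>" using P1 by (simp add: CS_def AS_def cat_cs_def cat_as_def pth_def)
  have c2: "CS (k1 + 1 + j) = cs2 j \<and> AS (k1 + 1 + j) = as2 j" for j
  proof (cases j)
    case 0 then show ?thesis using P3 by (simp add: CS_def AS_def cat_cs_def cat_as_def pth_def)
  next
    case (Suc j') then show ?thesis by (simp add: CS_def AS_def cat_cs_def cat_as_def)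
  qed
  have "\<forall>q\<in>set (p # ps). \<exists>j<k1 + (1 + k2). CS j = fst q \<and> AS j = snd q"
  proof
    fix q assume "q \<in> set (p # ps)"
    then consider "q = p" | "q \<in> set ps" by auto
    then show "\<exists>j<k1 + (1 + k2). CS j = fst q \<and> AS j = snd q"
    proof cases
      case 1 then show ?thesis using c1 p by (intro exI[of _ k1]) auto
    next
      case 2
      then obtain j where "j < k2" "cs2 j = fst q" "as2 j = snd q" using cov by blast
      then show ?thesis using c2[of j] by (intro exI[of _ "k1 + 1 + j"]) auto
    qed
  qed
  then show ?case using P by blast
qed

lemma window:
  fixes w ta tb M t j :: nat and cs cw :: "nat \<Rightarrow> 'c" and as aw :: "nat \<Rightarrow> 'd"
  assumes w: "0 < w" and tb: "ta + M * w = tb"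
    and CS: "\<forall>t. ta \<le> t \<longrightarrow> t \<le> tb \<longrightarrow> cs t = cw ((t - ta) mod w)"
    and AS: "\<forall>t. ta \<le> t \<longrightarrow> t < tb \<longrightarrow> as t = aw ((t - ta) mod w)"
    and t: "ta \<le> t" "t + w \<le> tb" and j: "j < w"
  shows "\<exists>t'. t \<le> t' \<and> t' < t + w \<and> cs t' = cw j \<and> as t' = aw j"
proof -
  define q where "q = (t - ta) div w"
  define r where "r = (t - ta) mod w"
  have tq: "t - ta = w * q + r" unfolding q_def r_def using mult_div_mod_eq[of w "t - ta"] by linarith
  have rw: "r < w" using w unfolding r_def by simp
  obtain t' where t': "t \<le> t'" "t' < t + w" "(t' - ta) mod w = j"
  proof (cases "r \<le> j")
    case True
    define t' where "t' = ta + (w * q + j)"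
    have "(t' - ta) mod w = j" unfolding t'_def using j by (simp only: add_diff_cancel_left' mod_mult_self4 mod_less)
    moreover have "t \<le> t'" "t' < t + w" using tq True j t unfolding t'_def by linarith+
    ultimately show ?thesis using that by blast
  next
    case False
    define t' where "t' = ta + (w * Suc q + j)"
    have "(t' - ta) mod w = j" unfolding t'_def using j by (simp only: add_diff_cancel_left' mod_mult_self4 mod_less)
    moreover have "t \<le> t'" "t' < t + w" using tq False j t rw unfolding t'_def mult_Suc_right by linarith+
    ultimately show ?thesis using that by blast
  qed
  have "cs t' = cw j" using CS t' t by (metis le_trans less_imp_le_nat order_less_le_trans)
  moreover have "as t' = aw j" using AS t' t by (metis le_trans order_less_le_trans)
  ultimately show ?thesis using t' by blast
qed

lemma rounds_bound:
  fixes R :: "('s::finite) reaction set" and ta tb w M tstar :: nat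
    and \<phi>v s h Pm :: real
  assumes fin: "finite R"
    and wf: "weakly_fair R cs as"
    and rp: "runtime_policy R \<rho>"
    and w: "0 < w" and M: "0 < M" and tb: "ta + M * w = tb"
    and CS: "\<forall>t. ta \<le> t \<longrightarrow> t \<le> tb \<longrightarrow> cs t = cw ((t - ta) mod w)"
    and AS: "\<forall>t. ta \<le> t \<longrightarrow> t < tb \<longrightarrow> as t = aw ((t - ta) mod w)"
    and cwB: "\<forall>j<w. cw j \<in> B"
    and Bcov: "\<forall>e\<in>B. \<exists>j<w. cw j = e"
    and FPcov: "\<forall>e\<in>B. \<forall>\<alpha>. Ef R \<phi>v s e \<alpha> \<longrightarrow> (\<exists>j<w. cw j = e \<and> aw j = \<alpha>)"
    and closed: "\<forall>e\<in>B. \<forall>\<alpha>. Ef R \<phi>v s e \<alpha> \<longrightarrow> result \<alpha> e \<in> B"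
    and phi: "0 < \<phi>v"
    and h: "h = real (card R) * s / \<phi>v" and hpos: "0 < h"
    and Pm: "\<forall>e\<in>B. 0 < ptot R \<phi>v e \<and> ptot R \<phi>v e \<le> Pm"
    and LM: "1/(2*h) \<le> real M / Pm"
    and ts: "tb < tstar"
  shows "ennreal (1/(2*h)) \<le> (\<Sum>i<(LEAST i. tstar \<le> rstart R cs as \<rho> (\<lambda>t. max t ta) i).
      TC R \<phi>v (\<rho> (cs (max (rstart R cs as \<rho> (\<lambda>t. max t ta) i) ta)))
         (cs (max (rstart R cs as \<rho> (\<lambda>t. max t ta) i) ta)))"
proof -
  define \<sigma> where "\<sigma> = (\<lambda>t::nat. max t ta)"
  have sp: "skipping_policy \<sigma>" by (simp add: skipping_policy_def \<sigma>_def)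
  define rs where "rs = rstart R cs as \<rho> \<sigma>"
  define u where "u = (\<lambda>i. \<sigma> (rs i))"
  define istar where "istar = (LEAST i. tstar \<le> rs i)"
  define T where "T = (\<lambda>i. TC R \<phi>v (\<rho> (cs (u i))) (cs (u i)))"
  have goal_eq: "(\<Sum>i<(LEAST i. tstar \<le> rstart R cs as \<rho> (\<lambda>t. max t ta) i).
      TC R \<phi>v (\<rho> (cs (max (rstart R cs as \<rho> (\<lambda>t. max t ta) i) ta)))
         (cs (max (rstart R cs as \<rho> (\<lambda>t. max t ta) i) ta))) = (\<Sum>i<istar. T i)"
    by (simp add: istar_def T_def u_def rs_def \<sigma>_def)
  have QR: "\<rho> e \<subseteq> R" for e using rp by (auto simp: runtime_policy_def NV_def)
  have rsS: "rs (Suc i) = tau R cs as (u i) (\<rho> (cs (u i)))" for i by (simp add: rs_def u_def)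
  have rs_gt: "u i < rs (Suc i)" for i using rstart_Suc[OF wf rp sp fin, of i] by (simp add: rs_def u_def)
  have u_ge: "ta \<le> u i" "rs i \<le> u i" for i by (simp_all add: u_def \<sigma>_def)
  have mono: "rs i \<le> rs j" if "i \<le> j" for i j
  proof (rule lift_Suc_mono_le[OF _ that])
    fix n show "rs n \<le> rs (Suc n)" using rs_gt[of n] u_ge(2)[of n] by linarith
  qed
  have ex: "\<exists>i. tstar \<le> rs i" using rstart_ge[OF wf rp sp fin, of tstar] by (auto simp: rs_def)
  have lt_istar: "i < istar" if "rs i < tstar" for i
  proof (rule ccontr)
    assume "\<not> i < istar"
    then have "rs istar \<le> rs i" using mono by simp
    moreover have "tstar \<le> rs istar" unfolding istar_def using LeastI_ex[OF ex] .
    ultimately show False using that by linarith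
  qed
  have inB: "cs t \<in> B" if "ta \<le> t" "t < tb" for t
    using CS cwB w that by auto
  define trapped where "trapped = (\<lambda>i. \<not> (\<exists>\<alpha>\<in>\<rho> (cs (u i)). \<exists>e'\<in>B. Ef R \<phi>v s e' \<alpha>) \<and>
                                     \<not> (\<forall>\<alpha>\<in>\<rho> (cs (u i)). \<exists>e'\<in>B. \<not> applicable \<alpha> e'))"
  have step: "rs (Suc i) \<le> u i + w" if nt: "\<not> trapped i" and ub: "u i + w \<le> tb" for i
  proof -
    define Q where "Q = \<rho> (cs (u i))"
    have win: "\<exists>t'. u i \<le> t' \<and> t' < u i + w \<and> cs t' = cw j \<and> as t' = aw j" if "j < w" for j
      using window[OF w tb CS AS u_ge(1)[of i] ub that] .
    consider (A) "\<exists>\<alpha>\<in>Q. \<exists>e'\<in>B. Ef R \<phi>v s e' \<alpha>" | (B) "\<forall>\<alpha>\<in>Q. \<exists>e'\<in>B. \<not> applicable \<alpha> e'"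
      using nt unfolding trapped_def Q_def by blast
    then show ?thesis
    proof cases
      case A
      then obtain \<alpha> e' where a: "\<alpha> \<in> Q" "e' \<in> B" "Ef R \<phi>v s e' \<alpha>" by blast
      then obtain j where j: "j < w" "cw j = e'" "aw j = \<alpha>" using FPcov by blast
      then obtain t' where t': "u i \<le> t'" "t' < u i + w" "as t' = \<alpha>" using win by blast
      have "tau R cs as (u i) Q \<le> Suc t'"
        by (rule tau_le) (use t' a in auto)
      then show ?thesis using rsS[of i] t' Q_def by simp
    next
      case B
      have "Q \<subseteq> (\<Union>t'\<in>{u i..u i + w}. inapp R (cs t'))"
      proof
        fix \<alpha> assume aQ: "\<alpha> \<in> Q"
        then obtain e' where e': "e' \<in> B" "\<not> applicable \<alpha> e'" using B by blast
        then obtain j where j: "j < w" "cw j = e'" using Bcov by blast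
        then obtain t' where t': "u i \<le> t'" "t' < u i + w" "cs t' = e'" using win by blast
        have "\<alpha> \<in> inapp R (cs t')" using aQ QR e' t' unfolding Q_def inapp_def by auto
        then show "\<alpha> \<in> (\<Union>t'\<in>{u i..u i + w}. inapp R (cs t'))" using t' by auto
      qed
      then have "tau R cs as (u i) Q \<le> u i + w"
        by (intro tau_le) (use w in auto)
      then show ?thesis using rsS[of i] Q_def by simp
    qed
  qed
  have bound: "i < M \<longrightarrow> (\<forall>j<i. \<not> trapped j) \<longrightarrow> u i \<le> ta + i * w" for i
  proof (induction i)
    case 0 show ?case by (simp add: u_def rs_def \<sigma>_def)
  next
    case (Suc i)
    show ?case
    proof (intro impI)
      assume a: "Suc i < M" "\<forall>j<Suc i. \<not> trapped j"
      then have ui: "u i \<le> ta + i * w" using Suc.IH by auto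
      have "Suc i * w \<le> M * w" by (rule mult_le_mono1) (use a(1) in simp)
      then have ub: "u i + w \<le> tb" using ui tb by simp
      have "rs (Suc i) \<le> u i + w" using step[OF _ ub] a(2) by blast
      moreover have "u (Suc i) = rs (Suc i)" using rs_gt[of i] u_ge(1)[of i] by (simp add: u_def \<sigma>_def)
      ultimately show "u (Suc i) \<le> ta + Suc i * w" using ui by simp
    qed
  qed
  have good: "u i + w \<le> tb \<and> i < istar \<and> cs (u i) \<in> B" if "i < M" "u i \<le> ta + i * w" for i
  proof -
    have "Suc i * w \<le> M * w" by (rule mult_le_mono1) (use that(1) in simp)
    then have ub: "u i + w \<le> tb" using that(2) tb by simp
    then have "rs i < tstar" using u_ge(2)[of i] ts w by linarith
    then show ?thesis using ub lt_istar inB[of "u i"] u_ge(1)[of i] w by auto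
  qed
  have Tnn: "0 \<le> T i" for i by simp
  have main: "ennreal (1/(2*h)) \<le> (\<Sum>i<istar. T i)"
  proof (cases "\<exists>i. i < M \<and> trapped i")
    case True
    then obtain i0 where i0: "i0 < M" "trapped i0" "\<forall>m<i0. \<not> (m < M \<and> trapped m)"
      using exists_least_iff[of "\<lambda>i. i < M \<and> trapped i"] by blast
    have "\<forall>j<i0. \<not> trapped j" using i0 by auto
    then have "u i0 \<le> ta + i0 * w" using bound i0(1) by blast
    then have g: "i0 < istar" "cs (u i0) \<in> B" using good i0(1) by auto
    define e where "e = cs (u i0)"
    define Q where "Q = \<rho> e"
    obtain \<beta> where \<beta>: "\<beta> \<in> Q" "\<forall>e'\<in>B. applicable \<beta> e'"
      using i0(2) unfolding trapped_def Q_def e_def by blast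
    have noF: "\<not> Ef R \<phi>v s e' \<alpha>" if "\<alpha> \<in> Q" "e' \<in> B" for \<alpha> e'
      using i0(2) that unfolding trapped_def Q_def e_def by blast
    have cR: "0 < card R" using hpos h phi by (cases "card R = 0") auto
    have sp0: "0 \<le> s / \<phi>v"
    proof -
      have "s / \<phi>v = h / real (card R)" using h cR by (simp add: field_simps)
      then show ?thesis using hpos cR by simp
    qed
    have haz: "\<forall>e\<in>B. (\<Sum>\<alpha>\<in>{\<alpha>\<in>R. applicable \<alpha> e \<and> (\<alpha> \<in> Q \<or> result \<alpha> e \<notin> B)}. propensity R \<phi>v e \<alpha>) \<le> h"
    proof
      fix e assume eB: "e \<in> B"
      define X where "X = {\<alpha>\<in>R. applicable \<alpha> e \<and> (\<alpha> \<in> Q \<or> result \<alpha> e \<notin> B)}"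
      have "propensity R \<phi>v e \<alpha> \<le> s / \<phi>v" if "\<alpha> \<in> X" for \<alpha>
      proof -
        have "\<not> Ef R \<phi>v s e \<alpha>" using that noF[of \<alpha> e] closed eB unfolding X_def by blast
        then show ?thesis using that unfolding X_def Ef_def by auto
      qed
      then have "(\<Sum>\<alpha>\<in>X. propensity R \<phi>v e \<alpha>) \<le> real (card X) * (s / \<phi>v)"
        by (rule sum_bounded_above)
      also have "\<dots> \<le> real (card R) * (s / \<phi>v)"
        using card_mono[OF fin, of X] sp0 by (intro mult_right_mono) (auto simp: X_def)
      finally show "(\<Sum>\<alpha>\<in>{\<alpha>\<in>R. applicable \<alpha> e \<and> (\<alpha> \<in> Q \<or> result \<alpha> e \<notin> B)}. propensity R \<phi>v e \<alpha>) \<le> h"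
        unfolding X_def h by simp
    qed
    have "ennreal (1/(2*h)) \<le> TC R \<phi>v Q e"
      by (rule TC_trapped[OF fin phi haz hpos Pm \<beta>(2) \<beta>(1)]) (use g e_def in simp)
    also have "\<dots> = T i0" by (simp add: T_def Q_def e_def)
    also have "\<dots> \<le> (\<Sum>i<istar. T i)" using g(1) by (intro member_le_sum) auto
    finally show ?thesis .
  next
    case False
    then have all: "\<forall>i<M. u i \<le> ta + i * w" using bound by auto
    have "T i \<ge> ennreal (1 / Pm)" if "i < M" for i
    proof -
      have eB: "cs (u i) \<in> B" using good that all by blast
      have "1 / Pm \<le> 1 / ptot R \<phi>v (cs (u i))" using Pm eB by (intro divide_left_mono) auto
      then have "ennreal (1 / Pm) \<le> ennreal (1 / ptot R \<phi>v (cs (u i)))" by (rule ennreal_leI)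
      also have "\<dots> \<le> T i" unfolding T_def by (rule TC_ge_inv)
      finally show ?thesis .
    qed
    then have s1: "(\<Sum>i<M. ennreal (1 / Pm)) \<le> (\<Sum>i<M. T i)" by (intro sum_mono) auto
    have "M - 1 < istar" using good[of "M - 1"] all M by auto
    then have sub: "{..<M} \<subseteq> {..<istar}" by auto
    have "(\<Sum>i<M. T i) \<le> (\<Sum>i<istar. T i)"
      by (rule sum_mono2) (use sub in auto)
    then have S: "(\<Sum>i<M. ennreal (1 / Pm)) \<le> (\<Sum>i<istar. T i)" using s1 by (rule order_trans[rotated])
    have "cw 0 \<in> B" using cwB w by blast
    then have Pm0: "0 < Pm" using Pm by force
    have "(\<Sum>i<M. ennreal (1 / Pm)) = ennreal (\<Sum>i<M. 1 / Pm)"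
      by (rule sum_ennreal) (use Pm0 in simp)
    also have "\<dots> = ennreal (real M / Pm)" by simp
    finally have "(\<Sum>i<M. ennreal (1 / Pm)) = ennreal (real M / Pm)" .
    then show ?thesis using S LM by (metis ennreal_leI order_trans)
  qed
  show ?thesis using main goal_eq by simp
qed

theorem lemma4p4:
  fixes x :: mode
    and R :: "('s::finite) reaction set"
    and \<mu> :: "'s \<Rightarrow> 'u"
    and Cr :: "(('u \<Rightarrow> nat) \<times> ('u \<Rightarrow> nat)) set"
    and \<phi> :: "nat \<Rightarrow> real"
    and C0 :: "'s config set"
  assumes protocol: "crn_protocol R"
    and volume: "\<exists>a>0. \<exists>b>0. \<forall>n\<ge>1. a * real n \<le> \<phi> n \<and> \<phi> n \<le> b * real n"
    and density: "\<exists>D>0. \<forall>c0 c. valid \<mu> Cr c0 \<and> reach R c0 c \<longrightarrow> real (norm1 c) \<le> D * real (norm1 c0)"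
    and corr: "correct x R \<mu> Cr"
    and C0_inf: "infinite C0"
    and C0_valid: "\<forall>c0\<in>C0. valid \<mu> Cr c0"
    and fault: "speed_fault x R \<mu> Cr \<phi> C0"
  shows "\<exists>\<kappa>>0. \<forall>n0>0. \<exists>c0\<in>C0. n0 \<le> norm1 c0 \<and>
           (\<exists>cs as. execution R c0 cs as \<and> weakly_fair R cs as \<and>
              (\<exists>\<sigma>. skipping_policy \<sigma> \<and>
                 (\<forall>\<rho>. runtime_policy R \<rho> \<longrightarrow>
                    ennreal (\<kappa> * real (norm1 c0)) \<le> RT x R \<mu> Cr \<phi> \<rho> \<sigma> cs as)))"
proof -
  have fin: "finite R" using protocol by (simp add: crn_protocol_def)
  obtain a where a: "a > 0" "\<forall>n\<ge>1. a * real n \<le> \<phi> n" using volume by blast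
  obtain D where D: "D > 0" "\<forall>c0 c. valid \<mu> Cr c0 \<and> reach R c0 c \<longrightarrow> real (norm1 c) \<le> D * real (norm1 c0)"
    using density by blast
  obtain s0 where s0: "s0 > 0" "\<forall>n0>0. \<exists>c0\<in>C0. n0 \<le> norm1 c0 \<and> (\<exists>c. pitfall x R \<mu> Cr (\<phi> (norm1 c0)) s0 c0 c)"
    using fault unfolding speed_fault_def by blast
  have cR: "0 < card R"
  proof -
    have "1 \<le> norm1 (\<lambda>_::'s. 1::nat)" by (simp add: norm1_def Suc_leI)
    then obtain \<alpha> where "\<alpha> \<in> R" using unimol_exists[OF protocol] by blast
    then show ?thesis using fin card_gt_0_iff by blast
  qed
  define \<kappa> where "\<kappa> = a / (2 * real (card R) * s0)"
  have \<kappa>0: "0 < \<kappa>" unfolding \<kappa>_def using a s0 cR by simp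
  show ?thesis
  proof (intro exI[of _ \<kappa>] conjI allI impI)
    show "0 < \<kappa>" by (rule \<kappa>0)
    fix n0 :: nat assume n0: "0 < n0"
    define N1 where "N1 = max n0 (nat \<lceil>s0 * real (card R) / a\<rceil> + 1)"
    have "0 < N1" using n0 by (simp add: N1_def)
    then obtain c0 c where c0: "c0 \<in> C0" "N1 \<le> norm1 c0" and pf: "pitfall x R \<mu> Cr (\<phi> (norm1 c0)) s0 c0 c"
      using s0(2) by blast
    define n where "n = norm1 c0"
    define \<phi>v where "\<phi>v = \<phi> n"
    have nn0: "n0 \<le> n" and n1: "1 \<le> n" using c0 n0 by (auto simp: n_def N1_def)
    have "s0 * real (card R) / a < real n"
    proof -
      have "real (nat \<lceil>s0 * real (card R) / a\<rceil> + 1) \<le> real n" using c0 by (simp add: n_def N1_def)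
      moreover have "s0 * real (card R) / a < real (nat \<lceil>s0 * real (card R) / a\<rceil> + 1)" by linarith
      ultimately show ?thesis by linarith
    qed
    then have san: "s0 * real (card R) < a * real n" using a by (simp add: field_simps)
    have \<phi>a: "a * real n \<le> \<phi>v" using a n1 by (simp add: \<phi>v_def)
    have \<phi>big: "s0 * real (card R) < \<phi>v" using san \<phi>a by linarith
    have \<phi>0: "0 < \<phi>v" using \<phi>big s0 cR by (smt (verit) mult_pos_pos of_nat_0_less_iff)
    have val: "valid \<mu> Cr c0" using C0_valid c0 by blast
    have rc: "reach R c0 c" using pf by (simp add: pitfall_def)
    have pfk: "\<And>k cs as. cs 0 = c \<Longrightarrow> (\<forall>i<k. as i \<in> R \<and> applicable (as i) (cs i) \<and> cs (Suc i) = result (as i) (cs i))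
        \<Longrightarrow> cs k \<in> target x R (Zset \<mu> Cr c0) \<Longrightarrow> (\<exists>i<k. propensity R \<phi>v (cs i) (as i) \<le> s0 / \<phi>v)"
      using pf unfolding pitfall_def \<phi>v_def n_def by blast
    define Efs where "Efs = Ef R \<phi>v s0"
    define r where "r = stepE Efs"
    have r_reach: "reach R y z" if "r\<^sup>*\<^sup>* y z" for y z
    proof -
      have "(stepE (E0 R))\<^sup>*\<^sup>* y z"
        using mono_rtranclp[of r "stepE (E0 R)"] that
        unfolding r_def Efs_def stepE_def by (meson Ef_E0)
      then show ?thesis by (simp add: reach_eq)
    qed
    define U where "U = {e::'s config. norm1 e \<le> nat \<lceil>D * real n\<rceil>}"
    have fU: "finite U" unfolding U_def by (rule finite_bounded)
    have reachU: "e \<in> U" if "reach R c0 e" for e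
    proof -
      have "real (norm1 e) \<le> D * real n" using D(2) val that by (simp add: n_def)
      then have "real (norm1 e) \<le> real_of_int \<lceil>D * real n\<rceil>"
        using le_of_int_ceiling[of "D * real n"] by linarith
      then have "int (norm1 e) \<le> \<lceil>D * real n\<rceil>" by linarith
      then show ?thesis unfolding U_def by (simp add: le_nat_iff)
    qed
    have cU: "\<forall>e. r\<^sup>*\<^sup>* c e \<longrightarrow> e \<in> U"
    proof (intro allI impI)
      fix e assume "r\<^sup>*\<^sup>* c e"
      then have "reach R c e" by (rule r_reach)
      then have "reach R c0 e" using rc unfolding reach_def by (rule rtranclp_trans[rotated])
      then show "e \<in> U" by (rule reachU)
    qed
    obtain d where d: "r\<^sup>*\<^sup>* c d" "\<forall>e. r\<^sup>*\<^sup>* d e \<longrightarrow> r\<^sup>*\<^sup>* e d"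
      using bottom_scc[OF cU fU] by blast
    define B where "B = {e. r\<^sup>*\<^sup>* d e}"
    have dB: "d \<in> B" by (simp add: B_def)
    have cB: "r\<^sup>*\<^sup>* c e" if "e \<in> B" for e
    proof -
      have "r\<^sup>*\<^sup>* d e" using that by (simp add: B_def)
      then show ?thesis using d(1) by (rule rtranclp_trans[rotated])
    qed
    have r0B: "reach R c0 e" if "e \<in> B" for e
    proof -
      have "reach R c e" using r_reach[OF cB[OF that]] .
      then show ?thesis using rc unfolding reach_def by (rule rtranclp_trans[rotated])
    qed
    have "B \<subseteq> U" using reachU r0B by blast
    then have finB: "finite B" using fU by (rule finite_subset)
    have strong: "\<forall>e\<in>B. \<forall>e'\<in>B. (stepE Efs)\<^sup>*\<^sup>* e e'"
    proof (intro ballI)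
      fix e e' assume "e \<in> B" "e' \<in> B"
      then have "r\<^sup>*\<^sup>* e d" "r\<^sup>*\<^sup>* d e'" using d(2) by (auto simp: B_def)
      then show "(stepE Efs)\<^sup>*\<^sup>* e e'" unfolding r_def by (rule rtranclp_trans)
    qed
    have closed: "\<forall>e\<in>B. \<forall>\<alpha>. Efs e \<alpha> \<longrightarrow> result \<alpha> e \<in> B"
    proof (intro ballI allI impI)
      fix e \<alpha> assume "e \<in> B" "Efs e \<alpha>"
      then have "r\<^sup>*\<^sup>* d e" "r e (result \<alpha> e)" unfolding B_def r_def stepE_def by blast+
      then show "result \<alpha> e \<in> B" unfolding B_def by simp
    qed
    have normB: "1 \<le> norm1 e" if "e \<in> B" for e
      using val reach_norm_mono[OF protocol r0B[OF that]] by (simp add: valid_def)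
    have fastpair: "\<exists>\<alpha>. Efs e \<alpha> \<and> 1 / real (card R) \<le> propensity R \<phi>v e \<alpha>" if eB: "e \<in> B" for e
    proof -
      obtain \<alpha> where \<alpha>: "\<alpha> \<in> R" "applicable \<alpha> e" "1 / real (card R) \<le> propensity R \<phi>v e \<alpha>"
        using unimol_exists[OF protocol normB[OF eB]] by blast
      have "s0 / \<phi>v < 1 / real (card R)" using \<phi>big \<phi>0 cR by (simp add: field_simps)
      then show ?thesis using \<alpha> by (intro exI[of _ \<alpha>]) (auto simp: Efs_def Ef_def)
    qed
    have notarget: "e \<notin> target x R (Zset \<mu> Cr c0)" if eB: "e \<in> B" for e
    proof
      assume et: "e \<in> target x R (Zset \<mu> Cr c0)"
      obtain k cs as where p: "pth Efs c e k cs as" using rtranclp_pth cB[OF eB] unfolding r_def by blast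
      then have "\<exists>i<k. propensity R \<phi>v (cs i) (as i) \<le> s0 / \<phi>v"
        using et by (intro pfk) (auto simp: pth_def Efs_def Ef_def)
      then show False using p by (force simp: pth_def Efs_def Ef_def)
    qed
    define FP where "FP = {(e, \<alpha>). e \<in> B \<and> Efs e \<alpha>}"
    have "FP \<subseteq> B \<times> R" by (auto simp: FP_def Efs_def Ef_def)
    then have finFP: "finite FP" using finB fin by (meson finite_SigmaI finite_subset)
    obtain ps where ps: "set ps = FP" using finite_list[OF finFP] by blast
    obtain w cw aw where W: "pth Efs d d w cw aw" "\<forall>p\<in>set ps. \<exists>j<w. cw j = fst p \<and> aw j = snd p"
      using cover_walk[OF strong closed dB, of ps d] ps dB by (auto simp: FP_def)
    have FPcov: "\<forall>e\<in>B. \<forall>\<alpha>. Efs e \<alpha> \<longrightarrow> (\<exists>j<w. cw j = e \<and> aw j = \<alpha>)"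
      using W(2) ps unfolding FP_def by fastforce
    have Bcov: "\<forall>e\<in>B. \<exists>j<w. cw j = e" using FPcov fastpair by blast
    have w0: "0 < w" using Bcov dB by force
    have cwB: "\<forall>j<w. cw j \<in> B"
    proof (intro allI impI)
      fix j assume "j < w"
      then have "(stepE Efs)\<^sup>*\<^sup>* d (cw j)" using pth_rtranclp[OF W(1), of j] by simp
      then show "cw j \<in> B" by (simp add: B_def r_def)
    qed
    define Pm where "Pm = Max (ptot R \<phi>v ` B)"
    have Pm: "\<forall>e\<in>B. 0 < ptot R \<phi>v e \<and> ptot R \<phi>v e \<le> Pm"
    proof
      fix e assume eB: "e \<in> B"
      obtain \<alpha> where \<alpha>: "Efs e \<alpha>" "1 / real (card R) \<le> propensity R \<phi>v e \<alpha>" using fastpair[OF eB] by blast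
      have "propensity R \<phi>v e \<alpha> \<le> ptot R \<phi>v e"
        using \<alpha> by (intro prop_le_ptot[OF fin _ \<phi>0]) (simp add: Efs_def Ef_def)
      moreover have "0 < 1 / real (card R)" using cR by simp
      moreover have "ptot R \<phi>v e \<le> Pm" unfolding Pm_def using finB eB by (intro Max_ge) auto
      ultimately show "0 < ptot R \<phi>v e \<and> ptot R \<phi>v e \<le> Pm" using \<alpha>(2) by linarith
    qed
    define h where "h = real (card R) * s0 / \<phi>v"
    have hpos: "0 < h" unfolding h_def using cR s0 \<phi>0 by simp
    define M where "M = nat \<lceil>Pm / (2 * h)\<rceil> + 1"
    have M0: "0 < M" by (simp add: M_def)
    have Pm0: "0 < Pm" using Pm dB by force
    have LM: "1/(2*h) \<le> real M / Pm"
    proof -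
      have "Pm / (2 * h) \<le> real M" unfolding M_def by linarith
      then show ?thesis using Pm0 hpos by (simp add: field_simps)
    qed
    obtain k1 cs1 as1 where P1: "pth (E0 R) c0 c k1 cs1 as1"
      using rtranclp_pth rc by (metis reach_eq)
    obtain k2 cs2 as2 where P2f: "pth Efs c d k2 cs2 as2"
      using rtranclp_pth d(1) unfolding r_def by blast
    have P2: "pth (E0 R) c d k2 cs2 as2" using P2f by (rule pth_mono) (simp add: Efs_def Ef_E0)
    have Pc: "pth (E0 R) d d (M * w) (\<lambda>i. cw (i mod w)) (\<lambda>i. aw (i mod w))"
      using pth_cycle[OF W(1) w0, of M] by (rule pth_mono) (simp add: Efs_def Ef_E0)
    define ta where "ta = k1 + k2"
    define tb where "tb = ta + M * w"
    define CS12 where "CS12 = cat_cs k1 cs1 cs2"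
    define AS12 where "AS12 = cat_as k1 as1 as2"
    have P12: "pth (E0 R) c0 d ta CS12 AS12"
      unfolding CS12_def AS12_def ta_def by (rule pth_append[OF P1 P2])
    define CSP where "CSP = cat_cs ta CS12 (\<lambda>i. cw (i mod w))"
    define ASP where "ASP = cat_as ta AS12 (\<lambda>i. aw (i mod w))"
    have PP: "pth (E0 R) c0 d tb CSP ASP"
      unfolding CSP_def ASP_def tb_def by (rule pth_append[OF P12 Pc])
    obtain cf af where fair: "execution R d cf af" "weakly_fair R cf af"
      using fair_exists[OF protocol normB[OF dB]] by blast
    define cs where "cs = cat_cs tb CSP cf"
    define as where "as = cat_as tb ASP af"
    have ex: "execution R c0 cs as" unfolding cs_def as_def by (rule exec_concat[OF PP fair(1)])
    have wfair: "weakly_fair R cs as" unfolding cs_def as_def by (rule fair_concat[OF PP fair])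
    have cs0: "cs 0 = c0" using ex by (simp add: execution_def)
    have csP: "cs t = CSP t" if "t \<le> tb" for t using that by (simp add: cs_def cat_cs_def)
    have CS: "\<forall>t. ta \<le> t \<longrightarrow> t \<le> tb \<longrightarrow> cs t = cw ((t - ta) mod w)"
    proof (intro allI impI)
      fix t assume t: "ta \<le> t" "t \<le> tb"
      show "cs t = cw ((t - ta) mod w)"
      proof (cases "t = ta")
        case True
        have "CS12 ta = d" "cw 0 = d" using P12 W(1) by (auto simp: pth_def)
        then show ?thesis using True csP t by (simp add: CSP_def cat_cs_def)
      next
        case False
        then show ?thesis using csP t by (simp add: CSP_def cat_cs_def)
      qed
    qed
    have AS: "\<forall>t. ta \<le> t \<longrightarrow> t < tb \<longrightarrow> as t = aw ((t - ta) mod w)"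
      by (simp add: as_def ASP_def cat_as_def)
    have cwB': "\<forall>j<w. cw j \<in> B" using cwB by blast
    define tstar where "tstar = (LEAST t. cs t \<in> target x R (Zset \<mu> Cr (cs 0)))"
    have exT: "\<exists>t. cs t \<in> target x R (Zset \<mu> Cr (cs 0))"
      using corr val ex wfair cs0 unfolding correct_def by blast
    have notT: "cs t \<notin> target x R (Zset \<mu> Cr (cs 0))" if "t \<le> tb" for t
    proof
      assume "cs t \<in> target x R (Zset \<mu> Cr (cs 0))"
      moreover have "reach R (cs t) d"
        using pth_rtranclp[OF PP that] csP[OF that] by (simp add: reach_eq)
      ultimately have "d \<in> target x R (Zset \<mu> Cr c0)" using target_closed cs0 by metis
      then show False using notarget dB by blast
    qed
    have ts: "tb < tstar"
    proof (rule ccontr)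
      assume "\<not> tb < tstar"
      then have "tstar \<le> tb" by simp
      moreover have "cs tstar \<in> target x R (Zset \<mu> Cr (cs 0))"
        unfolding tstar_def by (rule LeastI_ex[OF exT])
      ultimately show False using notT by blast
    qed
    have Lk: "ennreal (\<kappa> * real (norm1 c0)) \<le> ennreal (1/(2*h))"
    proof (rule ennreal_leI)
      have "\<kappa> * real n = a * real n / (2 * real (card R) * s0)" by (simp add: \<kappa>_def)
      also have "\<dots> \<le> \<phi>v / (2 * real (card R) * s0)"
        using \<phi>a cR s0 by (intro divide_right_mono) auto
      also have "\<dots> = 1/(2*h)" unfolding h_def using \<phi>0 by (simp add: field_simps)
      finally show "\<kappa> * real (norm1 c0) \<le> 1/(2*h)" by (simp add: n_def)
    qed
    have RTb: "ennreal (\<kappa> * real (norm1 c0)) \<le> RT x R \<mu> Cr \<phi> \<rho> (\<lambda>t. max t ta) cs as"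
      if rp: "runtime_policy R \<rho>" for \<rho>
    proof -
      have "ennreal (1/(2*h)) \<le> (\<Sum>i<(LEAST i. tstar \<le> rstart R cs as \<rho> (\<lambda>t. max t ta) i).
          TC R \<phi>v (\<rho> (cs (max (rstart R cs as \<rho> (\<lambda>t. max t ta) i) ta)))
             (cs (max (rstart R cs as \<rho> (\<lambda>t. max t ta) i) ta)))"
        by (rule rounds_bound[OF fin wfair rp w0 M0 tb_def[symmetric] CS AS cwB' Bcov
              FPcov[unfolded Efs_def] closed[unfolded Efs_def] \<phi>0 h_def hpos Pm LM ts])
      also have "\<dots> = RT x R \<mu> Cr \<phi> \<rho> (\<lambda>t. max t ta) cs as"
        by (simp add: RT_def Let_def tstar_def cs0 \<phi>v_def n_def)
      finally show ?thesis using Lk by (rule order_trans[rotated])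
    qed
    have sk: "skipping_policy (\<lambda>t. max t ta)" by (simp add: skipping_policy_def)
    show "\<exists>c0\<in>C0. n0 \<le> norm1 c0 \<and>
           (\<exists>cs as. execution R c0 cs as \<and> weakly_fair R cs as \<and>
              (\<exists>\<sigma>. skipping_policy \<sigma> \<and>
                 (\<forall>\<rho>. runtime_policy R \<rho> \<longrightarrow>
                    ennreal (\<kappa> * real (norm1 c0)) \<le> RT x R \<mu> Cr \<phi> \<rho> \<sigma> cs as)))"
      using c0(1) nn0 ex wfair sk RTb unfolding n_def by blast
  qed
qed

end
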